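(* Let $\alpha\in(0,\tfrac12)$, $K>0$ and $\mu\in\widetilde{\mathcal C}_{\mathcal M}(0,T)$, and let $X(t;0,z,\Omega)$ be the (forward-unique) flow of $\frac{dX}{dt}=\mathcal V[\mu_t](X)$. Then there exists $L=L(\alpha,K,\mu)$ such that $$d\big(X(t;0,(z_1,\Omega_1)),X(t;0,(z_2,\Omega_2))\big)\le d((z_1,\Omega_1),(z_2,\Omega_2))\,e^{Lt}$$ for all $(z_1,\Omega_1),(z_2,\Omega_2)\in\mathbb T\times\mathbb R$ and $t\in[0,T]$.
   Context: $\mathbb T$ is the unit circle identified with $(-\pi,\pi]$ via $z=e^{i\theta}$; $|\theta|_o$ = absolute value of the representative of $\theta$ mod $2\pi$ in $(-\pi,\pi]$; $d((e^{i\theta_1},\Omega_1),(e^{i\theta_2},\Omega_2))=(|\theta_1-\theta_2|_o^2+(\Omega_1-\Omega_2)^2)^{1/2}$. Kernel $h(\theta)=\sin\theta/|\theta|_o^{2\alpha}$ ($\theta\notin2\pi\mathbb Z$), $h=0$ on $2\pi\mathbb Z$. $\mathcal P[\mu](\theta,\Omega)=\Omega-K\int h(\theta-\theta')\,d\mu(\theta',\Omega')$, $\mathcal V[\mu](z,\Omega)=(\mathcal P[\mu](z,\Omega)\,iz,0)$. $\widetilde{\mathcal C}_{\mathcal M}(0,T)$: $\mu\in L^\infty(0,T;\mathcal M(\mathbb T\times\mathbb R))$ with $t\mapsto\int\varphi\,d\mu_t$ continuous for all bounded continuous $\varphi$. For such $\mu$, the characteristic system $\frac{dX}{dt}=\mathcal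 V[\mu_t](X)$, $X(0)=x$, has a global $C^1$ solution that is unique forward in time; $X(t;0,x)$ denotes it. *)

theory Defs
  imports "HOL-Analysis.Analysis"
begin

text \<open>Points of T x R are represented in angle coordinates (theta, Omega) :: real * real,
  theta being (a lift of) the angle of z = exp(i theta).\<close>

definition ang_rep :: "real \<Rightarrow> real" where
  "ang_rep \<theta> = \<theta> - 2 * pi * of_int (ceiling ((\<theta> - pi) / (2 * pi)))"

definition ang_abs :: "real \<Rightarrow> real" where
  "ang_abs \<theta> = \<bar>ang_rep \<theta>\<bar>"

definition dTR :: "real \<times> real \<Rightarrow> real \<times> real \<Rightarrow> real" where
  "dTR p q = sqrt ((ang_abs (fst p - fst q))\<^sup>2 + (snd p - snd q)\<^sup>2)"

definition hker :: "real \<Rightarrow> real \<Rightarrow> real" where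
  "hker \<alpha> \<theta> = (if ang_rep \<theta> = 0 then 0 else sin \<theta> / (ang_abs \<theta> powr (2 * \<alpha>)))"

definition Pfield :: "real \<Rightarrow> real \<Rightarrow> (real \<times> real) measure \<Rightarrow> real \<times> real \<Rightarrow> real" where
  "Pfield \<alpha> K \<mu> x = snd x - K * (\<integral>y. hker \<alpha> (fst x - fst y) \<partial>\<mu>)"

text \<open>Velocity field V[mu] in angle coordinates: d theta/dt = P[mu], d Omega/dt = 0
  (this is (P[mu] i z, 0) since d/dt e^{i theta} = i e^{i theta} theta').\<close>
definition Vfield :: "real \<Rightarrow> real \<Rightarrow> (real \<times> real) measure \<Rightarrow> real \<times> real \<Rightarrow> real \<times> real" where
  "Vfield \<alpha> K \<mu> x = (Pfield \<alpha> K \<mu> x, 0)"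

text \<open>A finite (nonnegative) Borel measure on T x R, realised on R x R and
  concentrated on (-pi, pi] x R.\<close>
definition meas_TR :: "(real \<times> real) measure \<Rightarrow> bool" where
  "meas_TR \<mu> \<longleftrightarrow> sets \<mu> = sets borel \<and> finite_measure \<mu> \<and>
     emeasure \<mu> (UNIV - {-pi<..pi} \<times> UNIV) = 0"

text \<open>Bounded continuous test functions on T x R, i.e. bounded continuous functions on
  R x R that are 2 pi-periodic in the angle variable.\<close>
definition test_fun_TR :: "(real \<times> real \<Rightarrow> real) \<Rightarrow> bool" where
  "test_fun_TR \<phi> \<longleftrightarrow> continuous_on UNIV \<phi> \<and> bounded (range \<phi>) \<and>
     (\<forall>\<theta> \<Omega>. \<phi> (\<theta> + 2 * pi, \<Omega>) = \<phi> (\<theta>, \<Omega>))"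

definition CM_tilde :: "real \<Rightarrow> (real \<Rightarrow> (real \<times> real) measure) \<Rightarrow> bool" where
  "CM_tilde T \<mu> \<longleftrightarrow>
     (\<forall>t\<in>{0..T}. meas_TR (\<mu> t)) \<and>
     (\<exists>M. \<forall>t\<in>{0..T}. measure (\<mu> t) UNIV \<le> M) \<and>
     (\<forall>\<phi>. test_fun_TR \<phi> \<longrightarrow> continuous_on {0..T} (\<lambda>t. \<integral>y. \<phi> y \<partial>(\<mu> t)))"

definition is_flow :: "real \<Rightarrow> real \<Rightarrow> real \<Rightarrow> (real \<Rightarrow> (real \<times> real) measure)
    \<Rightarrow> (real \<Rightarrow> real \<times> real \<Rightarrow> real \<times> real) \<Rightarrow> bool" where
  "is_flow \<alpha> K T \<mu> X \<longleftrightarrow>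
     (\<forall>x. X 0 x = x \<and>
        (\<forall>t\<in>{0..T}. ((\<lambda>s. X s x) has_vector_derivative Vfield \<alpha> K (\<mu> t) (X t x)) (at t within {0..T})))"

end

theory Submission
  imports Defs
begin

lemma ang_rep_bounds: "-pi < ang_rep x \<and> ang_rep x \<le> pi"
proof -
  define c where "c = ceiling ((x - pi) / (2 * pi))"
  have "(x - pi) / (2*pi) \<le> c" "c < (x - pi) / (2*pi) + 1" unfolding c_def by linarith+
  hence "x - pi \<le> 2*pi*c" "2*pi*c < x - pi + 2*pi" by (auto simp: field_simps)
  thus ?thesis unfolding ang_rep_def c_def[symmetric] by linarith
qed

lemma ang_rep_int: "\<exists>m::int. x - ang_rep x = 2*pi * m"
  unfolding ang_rep_def by auto

lemma cos_shift_int: "cos ((x::real) + 2*pi * of_int m) = cos x"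
  by (simp add: cos_add)

lemma sin_shift_int: "sin ((x::real) + 2*pi * of_int m) = sin x"
  by (simp add: sin_add)

lemma ang_abs_arccos: "ang_abs x = arccos (cos x)"
proof -
  obtain m::int where m: "x = ang_rep x + 2*pi * m" using ang_rep_int[of x] by (auto simp: algebra_simps)
  have "cos x = cos (ang_rep x)" by (subst m, rule cos_shift_int)
  also have "\<dots> = cos \<bar>ang_rep x\<bar>" by simp
  finally have c: "cos x = cos \<bar>ang_rep x\<bar>" .
  have "arccos (cos \<bar>ang_rep x\<bar>) = \<bar>ang_rep x\<bar>"
    using ang_rep_bounds[of x] by (intro arccos_cos) auto
  thus ?thesis unfolding ang_abs_def c by simp
qed

lemma hker_alt: "hker \<alpha> x = sin x / (arccos (cos x)) powr (2 * \<alpha>)"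
proof (cases "ang_rep x = 0")
  case True
  hence "arccos (cos x) = 0" using ang_abs_arccos[of x] unfolding ang_abs_def by simp
  thus ?thesis using True unfolding hker_def by simp
next
  case False
  thus ?thesis unfolding hker_def ang_abs_arccos by simp
qed

lemma A_bounds: "0 \<le> arccos (cos x) \<and> arccos (cos x) \<le> pi"
  by (simp add: arccos_lbound arccos_ubound)

lemma A_cos: "cos (arccos (cos x)) = cos x"
  by (simp add: cos_arccos)

lemma A_sin: "sin (arccos (cos x)) = \<bar>sin x\<bar>"
proof -
  have "sin (arccos (cos x)) = sqrt (1 - (cos x)\<^sup>2)" by (rule sin_arccos) auto
  also have "1 - (cos x)\<^sup>2 = (sin x)\<^sup>2" by (simp add: sin_squared_eq)
  finally show ?thesis by simp
qed

lemma A_sin_le: "\<bar>sin x\<bar> \<le> arccos (cos x)"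
  using A_sin[of x] sin_x_le_x[of "arccos (cos x)"] A_bounds[of x] by simp

lemma cos_lower: "1 - x\<^sup>2 / 2 \<le> cos (x::real)"
proof -
  have "cos x = cos (2 * (x/2))" by simp
  also have "\<dots> = 1 - 2 * sin (x/2) ^ 2" by (rule cos_double_sin)
  finally have e: "cos x = 1 - 2 * sin (x/2) ^ 2" .
  have "\<bar>sin (x/2)\<bar> \<le> \<bar>x/2\<bar>" by (rule abs_sin_x_le_abs_x)
  hence "sin (x/2) ^ 2 \<le> (x/2)^2"
    by (metis abs_ge_zero power2_abs power_mono)
  thus ?thesis unfolding e by (simp add: power_divide)
qed

lemma hker_periodic: "hker \<alpha> (x + 2 * pi * of_int m) = hker \<alpha> x"
  unfolding hker_alt cos_shift_int sin_shift_int ..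

lemma hker_deriv:
  assumes a0: "0 < \<alpha>" and a1: "\<alpha> < 1/2" and sx: "sin x \<noteq> 0"
  shows "\<exists>D. (hker \<alpha> has_real_derivative D) (at x) \<and> D \<ge> -8"
proof -
  define A where "A = arccos (cos x)"
  have cb: "-1 < cos x" "cos x < 1"
  proof -
    have "(sin x)\<^sup>2 > 0" using sx by simp
    hence "(cos x)\<^sup>2 < 1" using sin_cos_squared_add[of x] by linarith
    hence "\<bar>cos x\<bar> < 1" by (simp add: abs_square_less_1)
    thus "-1 < cos x" "cos x < 1" by linarith+
  qed
  have dA0: "((\<lambda>x. arccos (cos x)) has_real_derivative inverse (- sqrt (1 - (cos x)\<^sup>2)) * - sin x) (at x)"
    by (rule DERIV_chain2[OF DERIV_arccos[OF cb] DERIV_cos])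
  have "sqrt (1 - (cos x)\<^sup>2) = \<bar>sin x\<bar>" by (simp add: sin_squared_eq[symmetric])
  hence dA: "((\<lambda>x. arccos (cos x)) has_real_derivative sin x / \<bar>sin x\<bar>) (at x)"
    using dA0 by (simp add: divide_inverse mult.commute)
  have Apos: "A > 0"
  proof -
    have "A \<noteq> 0" proof
      assume "A = 0" hence "cos x = 1" using A_cos[of x] unfolding A_def by simp
      thus False using cb by simp
    qed
    thus ?thesis using A_bounds[of x] unfolding A_def by simp
  qed
  have dP: "((\<lambda>x. arccos (cos x) powr (2*\<alpha>)) has_real_derivative
      (2*\<alpha>) * A powr (2*\<alpha> - 1) * (sin x / \<bar>sin x\<bar>)) (at x)"
    using DERIV_fun_powr[OF dA, of "2*\<alpha>"] Apos unfolding A_def by simp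
  define Ap where "Ap = A powr (2*\<alpha>)"
  have Appos: "Ap > 0" unfolding Ap_def using Apos by simp
  have dH: "((\<lambda>x. sin x / arccos (cos x) powr (2*\<alpha>)) has_real_derivative
      (cos x * Ap - sin x * ((2*\<alpha>) * A powr (2*\<alpha> - 1) * (sin x / \<bar>sin x\<bar>))) / (Ap * Ap)) (at x)"
    using DERIV_divide[OF DERIV_sin dP] Appos unfolding Ap_def A_def by simp
  have hfun: "hker \<alpha> = (\<lambda>x. sin x / arccos (cos x) powr (2*\<alpha>))"
    by (rule ext) (simp add: hker_alt)
  define D where "D = (cos x * Ap - sin x * ((2*\<alpha>) * A powr (2*\<alpha> - 1) * (sin x / \<bar>sin x\<bar>))) / (Ap * Ap)"
  have ss: "sin x * (sin x / \<bar>sin x\<bar>) = \<bar>sin x\<bar>"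
    using sx by (simp add: abs_if)
  have sle: "\<bar>sin x\<bar> \<le> A" unfolding A_def by (rule A_sin_le)
  have pw: "A powr (2*\<alpha> - 1) * A = Ap"
  proof -
    have e: "A powr (2*\<alpha> - 1) * A powr 1 = A powr (2*\<alpha>)" by (subst powr_add[symmetric]) simp
    thus ?thesis using Apos by (simp add: Ap_def)
  qed
  have "sin x * ((2*\<alpha>) * A powr (2*\<alpha> - 1) * (sin x / \<bar>sin x\<bar>))
      = (2*\<alpha>) * A powr (2*\<alpha> - 1) * \<bar>sin x\<bar>" using ss by (metis mult.left_commute)
  also have "\<dots> \<le> (2*\<alpha>) * A powr (2*\<alpha> - 1) * A"
    using sle a0 by (intro mult_left_mono) auto
  also have "\<dots> = 2*\<alpha>*Ap" using pw by simp
  finally have num: "sin x * ((2*\<alpha>) * A powr (2*\<alpha> - 1) * (sin x / \<bar>sin x\<bar>)) \<le> 2*\<alpha>*Ap" .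
  have "D \<ge> (cos x * Ap - 2*\<alpha>*Ap) / (Ap*Ap)"
    unfolding D_def using num Appos by (intro divide_right_mono) auto
  moreover have "(cos x * Ap - 2*\<alpha>*Ap) / (Ap*Ap) = (cos x - 2*\<alpha>) / Ap"
    using Appos by (simp add: field_simps)
  moreover have "cos x \<ge> 1 - A\<^sup>2/2" using cos_lower[of A] A_cos[of x] unfolding A_def by simp
  moreover have "(1 - A\<^sup>2/2 - 2*\<alpha>) / Ap \<le> (cos x - 2*\<alpha>) / Ap"
    using Appos \<open>cos x \<ge> 1 - A\<^sup>2/2\<close> by (intro divide_right_mono) auto
  ultimately have D1: "D \<ge> (1 - A\<^sup>2/2 - 2*\<alpha>) / Ap"
    by linarith
  have "(1 - A\<^sup>2/2 - 2*\<alpha>) / Ap \<ge> (- A\<^sup>2/2) / Ap"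
    using Appos a1 by (intro divide_right_mono) auto
  moreover have "(- A\<^sup>2/2) / Ap = - (A powr (2 - 2*\<alpha>)) / 2"
  proof -
    have "A powr (2 - 2*\<alpha>) = A powr 2 / Ap" unfolding Ap_def by (rule powr_diff)
    moreover have "A powr 2 = A\<^sup>2" using Apos by (simp add: powr_numeral)
    ultimately show ?thesis by simp
  qed
  moreover have "A powr (2 - 2*\<alpha>) \<le> 16"
  proof -
    have "A powr (2 - 2*\<alpha>) \<le> 4 powr (2 - 2*\<alpha>)"
      using Apos A_bounds[of x] pi_less_4 a1 unfolding A_def by (intro powr_mono2) auto
    also have "\<dots> \<le> 4 powr 2" using a0 by (intro powr_mono) auto
    finally show ?thesis by simp
  qed
  ultimately have "D \<ge> -8" using D1 by linarith
  thus ?thesis using dH unfolding hfun D_def by blast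
qed

lemma A_cont: "continuous_on UNIV (\<lambda>x::real. arccos (cos x))"
  by (intro continuous_intros) auto

lemma hker_cont:
  assumes a0: "0 < \<alpha>" and a1: "\<alpha> < 1/2"
  shows "isCont (hker \<alpha>) x"
proof (cases "arccos (cos x) = 0")
  case False
  hence pos: "arccos (cos x) > 0" using A_bounds[of x] by simp
  have cA: "isCont (\<lambda>x. arccos (cos x)) x" using A_cont by (simp add: continuous_on_eq_continuous_at)
  have "isCont (\<lambda>x. sin x / arccos (cos x) powr (2 * \<alpha>)) x"
    using cA pos by (intro continuous_intros) auto
  moreover have "hker \<alpha> = (\<lambda>x. sin x / arccos (cos x) powr (2*\<alpha>))"
    by (rule ext) (simp add: hker_alt)
  ultimately show ?thesis by simp
next
  case True
  have hx: "hker \<alpha> x = 0" using True by (simp add: hker_alt)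
  have cA: "((\<lambda>x. arccos (cos x)) \<longlongrightarrow> 0) (at x)"
    using A_cont True by (metis continuous_on_eq_continuous_at isCont_def open_UNIV UNIV_I)
  have g: "((\<lambda>y. arccos (cos y) powr (1 - 2*\<alpha>)) \<longlongrightarrow> 0) (at x)"
    by (rule tendsto_zero_powrI[OF cA tendsto_const]) (use a1 A_bounds in auto)
  have bnd: "norm (hker \<alpha> y) \<le> arccos (cos y) powr (1 - 2*\<alpha>)" for y
  proof (cases "arccos (cos y) = 0")
    case True thus ?thesis by (simp add: hker_alt)
  next
    case False
    hence p: "arccos (cos y) > 0" using A_bounds[of y] by simp
    have "norm (hker \<alpha> y) = \<bar>sin y\<bar> / arccos (cos y) powr (2*\<alpha>)" by (simp add: hker_alt)
    also have "\<dots> \<le> arccos (cos y) / arccos (cos y) powr (2*\<alpha>)"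
      using A_sin_le[of y] p by (intro divide_right_mono) auto
    also have "\<dots> = arccos (cos y) powr (1 - 2*\<alpha>)"
      using p by (simp add: powr_diff)
    finally show ?thesis .
  qed
  have "(hker \<alpha> \<longlongrightarrow> 0) (at x)"
    by (rule Lim_null_comparison[OF _ g]) (use bnd in auto)
  thus ?thesis unfolding isCont_def hx .
qed

lemma hker_mono:
  assumes a0: "0 < \<alpha>" and a1: "\<alpha> < 1/2" and ab: "a \<le> b"
  shows "hker \<alpha> b - hker \<alpha> a \<ge> -8 * (b - a)"
proof -
  define S where "S = {y\<in>{a..b}. sin y = 0}"
  have "S \<subseteq> (\<lambda>i. of_int i * pi) ` {floor (a/pi)..ceiling (b/pi)}"
  proof
    fix y assume "y \<in> S"
    then obtain i::int where i: "y = of_int i * pi" "a \<le> y" "y \<le> b"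
      unfolding S_def using sin_zero_iff_int2 by auto
    have "a/pi \<le> i" "i \<le> b/pi" using i pi_gt_zero by (auto simp: field_simps)
    hence "floor (a/pi) \<le> i" "i \<le> ceiling (b/pi)" by linarith+
    thus "y \<in> (\<lambda>i. of_int i * pi) ` {floor (a/pi)..ceiling (b/pi)}" using i by auto
  qed
  hence fS: "finite S" by (rule finite_subset) auto
  define f' where "f' y = (if sin y = 0 then -8 else (SOME D. (hker \<alpha> has_real_derivative D) (at y) \<and> D \<ge> -8))" for y
  have f'p: "sin y \<noteq> 0 \<Longrightarrow> (hker \<alpha> has_real_derivative f' y) (at y) \<and> f' y \<ge> -8" for y
    unfolding f'_def using someI_ex[OF hker_deriv[OF a0 a1, of y]] by simp
  have f'ge: "f' y \<ge> -8" for y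
    using f'p[of y] unfolding f'_def by (cases "sin y = 0") auto
  have int: "(f' has_integral (hker \<alpha> b - hker \<alpha> a)) {a..b}"
  proof (rule fundamental_theorem_of_calculus_interior_strong[OF fS ab])
    fix y assume "y \<in> {a<..<b} - S"
    hence "sin y \<noteq> 0" unfolding S_def by auto
    thus "(hker \<alpha> has_vector_derivative f' y) (at y)"
      using f'p has_real_derivative_iff_has_vector_derivative by blast
  next
    show "continuous_on {a..b} (hker \<alpha>)"
      using hker_cont[OF a0 a1] by (simp add: continuous_at_imp_continuous_on)
  qed
  have c: "((\<lambda>y. -8) has_integral (-8 * (b - a))) {a..b}"
    using has_integral_const_real[of "-8::real" a b] ab by (simp add: mult.commute)
  have "-8 * (b - a) \<le> hker \<alpha> b - hker \<alpha> a"
    by (rule has_integral_le[OF c int]) (use f'ge in auto)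
  thus ?thesis by simp
qed

lemma hker_onesided:
  assumes a0: "0 < \<alpha>" and a1: "\<alpha> < 1/2"
  shows "r * (hker \<alpha> u - hker \<alpha> (u - r)) \<ge> -8 * r\<^sup>2"
proof (cases "r \<ge> 0")
  case True
  have "hker \<alpha> u - hker \<alpha> (u - r) \<ge> -8 * r" using hker_mono[OF a0 a1, of "u - r" u] True by simp
  hence "r * (hker \<alpha> u - hker \<alpha> (u - r)) \<ge> r * (-8 * r)" using True by (intro mult_left_mono) auto
  thus ?thesis by (simp add: power2_eq_square)
next
  case False
  have "hker \<alpha> (u - r) - hker \<alpha> u \<ge> -8 * (- r)" using hker_mono[OF a0 a1, of u "u - r"] False by simp
  hence "hker \<alpha> u - hker \<alpha> (u - r) \<le> - 8 * r" by simp
  hence "r * (hker \<alpha> u - hker \<alpha> (u - r)) \<ge> r * (-8 * r)" using False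
    by (intro mult_left_mono_neg) auto
  thus ?thesis by (simp add: power2_eq_square)
qed

lemma hker_bound:
  assumes a0: "0 < \<alpha>" and a1: "\<alpha> < 1/2"
  shows "\<bar>hker \<alpha> y\<bar> \<le> 4"
proof (cases "arccos (cos y) = 0")
  case True thus ?thesis by (simp add: hker_alt)
next
  case False
  hence p: "arccos (cos y) > 0" using A_bounds[of y] by simp
  have "\<bar>hker \<alpha> y\<bar> = \<bar>sin y\<bar> / arccos (cos y) powr (2*\<alpha>)" by (simp add: hker_alt)
  also have "\<dots> \<le> arccos (cos y) / arccos (cos y) powr (2*\<alpha>)"
    using A_sin_le[of y] p by (intro divide_right_mono) auto
  also have "\<dots> = arccos (cos y) powr (1 - 2*\<alpha>)"
    using p by (simp add: powr_diff)
  also have "\<dots> \<le> 4 powr (1 - 2*\<alpha>)"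
    using p A_bounds[of y] pi_less_4 a1 by (intro powr_mono2) auto
  also have "\<dots> \<le> 4 powr 1" using a0 by (intro powr_mono) auto
  finally show ?thesis by simp
qed

lemma hker_meas:
  assumes a0: "0 < \<alpha>" and a1: "\<alpha> < 1/2" and sN: "sets N = sets (borel :: (real \<times> real) measure)"
  shows "(\<lambda>y. hker \<alpha> (z - fst y)) \<in> borel_measurable N"
proof -
  have "continuous_on UNIV (hker \<alpha>)" using hker_cont[OF a0 a1] by (simp add: continuous_at_imp_continuous_on)
  moreover have "(\<lambda>y::real\<times>real. z - fst y) \<in> borel_measurable borel" by (intro borel_measurable_continuous_onI continuous_intros)
  ultimately have "(\<lambda>y::real\<times>real. hker \<alpha> (z - fst y)) \<in> borel_measurable borel"
    by (rule borel_measurable_continuous_on)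
  thus ?thesis by (simp add: measurable_cong_sets[OF sN refl])
qed

lemma hker_integrable:
  assumes a0: "0 < \<alpha>" and a1: "\<alpha> < 1/2" and sN: "sets N = sets (borel :: (real \<times> real) measure)"
    and fN: "finite_measure N"
  shows "integrable N (\<lambda>y. hker \<alpha> (z - fst y))"
  by (rule finite_measure.integrable_const_bound[OF fN, where B=4])
     (use hker_bound[OF a0 a1] hker_meas[OF a0 a1 sN] in auto)

lemma vd_fst:
  assumes "(f has_vector_derivative (u::real, v::real)) F"
  shows "((\<lambda>s. fst (f s)) has_real_derivative u) F"
  using has_derivative_fst[OF assms[unfolded has_vector_derivative_def]]
  by (simp add: has_real_derivative_iff_has_vector_derivative has_vector_derivative_def)

lemma vd_snd:
  assumes "(f has_vector_derivative (u::real, v::real)) F"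
  shows "((\<lambda>s. snd (f s)) has_real_derivative v) F"
  using has_derivative_snd[OF assms[unfolded has_vector_derivative_def]]
  by (simp add: has_real_derivative_iff_has_vector_derivative has_vector_derivative_def)

lemma mono_within:
  fixes f :: "real \<Rightarrow> real"
  assumes d: "\<And>s. s \<in> {0..T} \<Longrightarrow> (f has_real_derivative f' s) (at s within {0..T})"
    and n: "\<And>s. s \<in> {0..T} \<Longrightarrow> f' s \<le> 0"
    and t: "t \<in> {0..T}"
  shows "f t \<le> f 0"
proof (cases "t = 0")
  case True thus ?thesis by simp
next
  case False
  hence t0: "0 < t" using t by simp
  have "continuous_on {0..T} f"
    using d by (meson DERIV_continuous continuous_on_eq_continuous_within)
  hence c: "continuous_on {0..t} f" by (rule continuous_on_subset) (use t in auto)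
  have dz: "(f has_real_derivative f' z) (at z)" if "0 < z" "z < t" for z
  proof -
    have "z \<in> {0..T}" "z < T" using that t by auto
    thus ?thesis using d[of z] at_within_Icc_at[of 0 z T] that by simp
  qed
  obtain l z where lz: "0 < z" "z < t" "(f has_real_derivative l) (at z)" "f t - f 0 = (t - 0) * l"
    using MVT[OF t0 c] dz real_differentiable_def by blast
  have "l = f' z" using DERIV_unique[OF lz(3) dz[OF lz(1,2)]] .
  moreover have "f' z \<le> 0" using n[of z] lz t by auto
  ultimately have "(t - 0) * l \<le> 0" using t0 by (simp add: mult_nonneg_nonpos)
  thus ?thesis using lz(4) by simp
qed

lemma gronwall_within:
  fixes p :: "real \<Rightarrow> real"
  assumes d: "\<And>s. s \<in> {0..T} \<Longrightarrow> (p has_real_derivative p' s) (at s within {0..T})"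
    and n: "\<And>s. s \<in> {0..T} \<Longrightarrow> p' s \<le> c * p s"
    and t: "t \<in> {0..T}"
  shows "p t \<le> p 0 * exp (c * t)"
proof -
  define q where "q s = p s * exp (- c * s)" for s
  have dq: "(q has_real_derivative (p' s * exp (- c * s) + p s * (exp (- c * s) * (- c)))) (at s within {0..T})"
    if "s \<in> {0..T}" for s
    unfolding q_def using d[OF that] by (auto intro!: derivative_eq_intros)
  have "q t \<le> q 0"
  proof (rule mono_within[OF dq _ t])
    fix s assume s: "s \<in> {0..T}"
    have "p' s * exp (- c * s) \<le> c * p s * exp (- c * s)" using n[OF s] by simp
    thus "p' s * exp (- c * s) + p s * (exp (- c * s) * (- c)) \<le> 0" by (simp add: algebra_simps)
  qed
  hence "p t * exp (- c * t) \<le> p 0" unfolding q_def by simp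
  hence "p t * exp (- c * t) * exp (c * t) \<le> p 0 * exp (c * t)" by (simp add: mult_right_mono)
  thus ?thesis by (simp add: exp_minus_inverse mult.assoc exp_add[symmetric])
qed

lemma ang_abs_le: "ang_abs x \<le> \<bar>x\<bar>"
proof (cases "\<bar>x\<bar> \<le> pi")
  case True
  have "arccos (cos \<bar>x\<bar>) = \<bar>x\<bar>" using True by (intro arccos_cos) auto
  thus ?thesis unfolding ang_abs_arccos by simp
next
  case False thus ?thesis unfolding ang_abs_arccos using A_bounds[of x] by linarith
qed

lemma aux1:
  assumes "(K::real) > 0" "-8*a*M \<le> Y"
  shows "-2*K*Y \<le> 2*K*(8*a*M)"
proof -
  have "2*K*(-8*a*M) \<le> 2*K*Y" using assms by (intro mult_left_mono) auto
  thus ?thesis by (simp add: algebra_simps)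
qed

theorem mainTheorem15:
  fixes \<alpha> K T :: real and \<mu> :: "real \<Rightarrow> (real \<times> real) measure"
  assumes "0 < \<alpha>" "\<alpha> < 1/2" "0 < K" "0 < T"
    and "CM_tilde T \<mu>"
  shows "\<exists>L. \<forall>X. is_flow \<alpha> K T \<mu> X \<longrightarrow>
           (\<forall>x1 x2 t. fst x1 \<in> {-pi<..pi} \<longrightarrow> fst x2 \<in> {-pi<..pi} \<longrightarrow> t \<in> {0..T} \<longrightarrow>
              dTR (X t x1) (X t x2) \<le> dTR x1 x2 * exp (L * t))"
proof -
  note a0 = assms(1) and a1 = assms(2) and K0 = assms(3)
  from assms(5) obtain M where mt: "\<forall>t\<in>{0..T}. meas_TR (\<mu> t)"
    and M: "\<forall>t\<in>{0..T}. measure (\<mu> t) UNIV \<le> M" unfolding CM_tilde_def by blast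
  define M0 where "M0 = max M 0"
  have M0: "M0 \<ge> 0" "M0 \<ge> M" unfolding M0_def by auto
  define c where "c = 1 + 16 * K * M0"
  have sN: "sets (\<mu> s) = sets borel" and fN: "finite_measure (\<mu> s)" if "s \<in> {0..T}" for s
    using mt that unfolding meas_TR_def by auto
  show ?thesis
  proof (intro exI[of _ "c/2"] allI impI)
    fix X :: "real \<Rightarrow> real \<times> real \<Rightarrow> real \<times> real" and x1 x2 :: "real \<times> real" and t :: real
    assume fl: "is_flow \<alpha> K T \<mu> X" and t: "t \<in> {0..T}"
    have X0: "X 0 x = x" for x using fl unfolding is_flow_def by blast
    have dX: "((\<lambda>s. X s x) has_vector_derivative (Pfield \<alpha> K (\<mu> s) (X s x), 0)) (at s within {0..T})"
      if "s \<in> {0..T}" for x s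
    proof -
      have "((\<lambda>s. X s x) has_vector_derivative Vfield \<alpha> K (\<mu> s) (X s x)) (at s within {0..T})"
        using fl that unfolding is_flow_def by blast
      thus ?thesis unfolding Vfield_def .
    qed
    have dth: "((\<lambda>s. fst (X s x)) has_real_derivative Pfield \<alpha> K (\<mu> s) (X s x)) (at s within {0..T})"
      if "s \<in> {0..T}" for x s using vd_fst[OF dX[OF that]] .
    have dom: "((\<lambda>s. snd (X s x)) has_real_derivative 0) (at s within {0..T})"
      if "s \<in> {0..T}" for x s using vd_snd[OF dX[OF that]] .
    have sndc: "snd (X s x) = snd x" if s: "s \<in> {0..T}" for x s
    proof -
      have "snd (X s x) \<le> snd (X 0 x)"
        by (rule mono_within[OF dom _ s]) auto
      moreover have "- snd (X s x) \<le> - snd (X 0 x)"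
        by (rule mono_within[where f'="\<lambda>_. - 0", OF _ _ s]) (use DERIV_minus[OF dom] in auto)
      ultimately show ?thesis using X0 by simp
    qed
    define Om where "Om = snd x1 - snd x2"
    define \<delta> where "\<delta> s = fst (X s x1) - fst (X s x2)" for s
    obtain m::int where m: "\<delta> 0 - ang_rep (\<delta> 0) = 2 * pi * m" using ang_rep_int by blast
    define r where "r s = \<delta> s - 2 * pi * m" for s
    define I where "I s x = (\<integral>y. hker \<alpha> (fst (X s x) - fst y) \<partial>\<mu> s)" for s x
    have P: "Pfield \<alpha> K (\<mu> s) (X s x) = snd x - K * I s x" if "s \<in> {0..T}" for s x
      using sndc[OF that] unfolding Pfield_def I_def by simp
    define p where "p s = (r s)\<^sup>2 + Om\<^sup>2" for s
    have dr: "(r has_real_derivative ((snd x1 - K * I s x1) - (snd x2 - K * I s x2))) (at s within {0..T})"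
      if "s \<in> {0..T}" for s
    proof -
      have "((\<lambda>s. fst (X s x1) - fst (X s x2) - 2 * pi * m) has_real_derivative
          (Pfield \<alpha> K (\<mu> s) (X s x1) - Pfield \<alpha> K (\<mu> s) (X s x2) - 0)) (at s within {0..T})"
        by (intro DERIV_diff dth that DERIV_const)
      thus ?thesis unfolding r_def \<delta>_def using P[OF that] by simp
    qed
    have dp: "(p has_real_derivative (2 * r s * ((snd x1 - K * I s x1) - (snd x2 - K * I s x2)))) (at s within {0..T})"
      if "s \<in> {0..T}" for s
    proof -
      note DERIV_add[OF DERIV_mult[OF dr[OF that] dr[OF that]] DERIV_const[of "Om * Om"]]
      thus ?thesis unfolding p_def power2_eq_square by (simp add: algebra_simps)
    qed
    have key: "r s * (I s x1 - I s x2) \<ge> -8 * (r s)\<^sup>2 * M0" if s: "s \<in> {0..T}" for s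
    proof -
      let ?g1 = "\<lambda>y. hker \<alpha> (fst (X s x1) - fst y)"
      let ?g2 = "\<lambda>y. hker \<alpha> (fst (X s x2) - fst y)"
      have i1: "integrable (\<mu> s) ?g1" and i2: "integrable (\<mu> s) ?g2"
        using hker_integrable[OF a0 a1 sN[OF s] fN[OF s]] by auto
      have "r s * (I s x1 - I s x2) = (\<integral>y. r s * (?g1 y - ?g2 y) \<partial>\<mu> s)"
        unfolding I_def using i1 i2 by (simp add: integral_diff)
      also have "\<dots> \<ge> (\<integral>y. -8 * (r s)\<^sup>2 \<partial>\<mu> s)"
      proof (rule integral_mono)
        show "integrable (\<mu> s) (\<lambda>y. -8 * (r s)\<^sup>2)"
          by (rule finite_measure.integrable_const[OF fN[OF s]])
        show "integrable (\<mu> s) (\<lambda>y. r s * (?g1 y - ?g2 y))" using i1 i2 by auto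
        fix y
        have e: "fst (X s x2) - fst y = (fst (X s x1) - fst y - r s) + 2 * pi * of_int (- m)"
          unfolding r_def \<delta>_def by simp
        have "?g2 y = hker \<alpha> (fst (X s x1) - fst y - r s)" unfolding e hker_periodic ..
        thus "-8 * (r s)\<^sup>2 \<le> r s * (?g1 y - ?g2 y)" using hker_onesided[OF a0 a1] by simp
      qed
      also have "(\<integral>y. -8 * (r s)\<^sup>2 \<partial>\<mu> s) = measure (\<mu> s) UNIV * (-8 * (r s)\<^sup>2)"
        using sets_eq_imp_space_eq[OF sN[OF s]] by simp
      also have "\<dots> \<ge> M0 * (-8 * (r s)\<^sup>2)"
      proof -
        have "measure (\<mu> s) UNIV \<le> M" using M s by blast
        hence "measure (\<mu> s) UNIV \<le> M0" using M0 by linarith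
        thus ?thesis by (intro mult_right_mono_neg) auto
      qed
      finally show ?thesis by (simp add: mult_ac)
    qed
    have pineq: "2 * r s * ((snd x1 - K * I s x1) - (snd x2 - K * I s x2)) \<le> c * p s"
      if s: "s \<in> {0..T}" for s
    proof -
      have e: "2 * r s * ((snd x1 - K * I s x1) - (snd x2 - K * I s x2))
          = 2 * r s * Om - 2 * K * (r s * (I s x1 - I s x2))" unfolding Om_def by (simp add: algebra_simps)
      have "2 * r s * Om \<le> (r s)\<^sup>2 + Om\<^sup>2" using sum_squares_bound[of "r s" Om] by (simp add: algebra_simps)
      moreover have "- 2 * K * (r s * (I s x1 - I s x2)) \<le> 2 * K * (8 * (r s)\<^sup>2 * M0)"
        by (rule aux1[OF K0 key[OF s]])
      moreover have "16 * K * M0 * (r s)\<^sup>2 \<le> 16 * K * M0 * ((r s)\<^sup>2 + Om\<^sup>2)"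
        using K0 M0 by (intro mult_left_mono) auto
      moreover have "c * p s = (r s)\<^sup>2 + Om\<^sup>2 + 16 * K * M0 * ((r s)\<^sup>2 + Om\<^sup>2)"
        unfolding c_def p_def by (simp add: algebra_simps)
      moreover have "2 * K * (8 * (r s)\<^sup>2 * M0) = 16 * K * M0 * (r s)\<^sup>2" by simp
      ultimately show ?thesis unfolding e by linarith
    qed
    have gr: "p t \<le> p 0 * exp (c * t)"
      by (rule gronwall_within[OF dp pineq t])
    have r0: "r 0 = ang_rep (fst x1 - fst x2)" using m unfolding r_def \<delta>_def X0 by simp
    have p0: "p 0 = (dTR x1 x2)\<^sup>2" unfolding p_def r0 dTR_def Om_def ang_abs_def by simp
    have dt: "dTR (X t x1) (X t x2) = sqrt ((ang_abs (\<delta> t))\<^sup>2 + Om\<^sup>2)"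
      unfolding dTR_def \<delta>_def Om_def using sndc[OF t] by simp
    have "ang_abs (\<delta> t) = ang_abs (r t)"
      unfolding ang_abs_arccos r_def using cos_shift_int[of "\<delta> t - 2 * pi * m" m] by simp
    also have "\<dots> \<le> \<bar>r t\<bar>" by (rule ang_abs_le)
    finally have "(ang_abs (\<delta> t))\<^sup>2 \<le> (r t)\<^sup>2"
      by (metis abs_ge_zero ang_abs_def power2_abs power_mono)
    hence "dTR (X t x1) (X t x2) \<le> sqrt (p t)" unfolding dt p_def by simp
    also have "\<dots> \<le> sqrt (p 0 * exp (c * t))" using gr by simp
    also have "\<dots> = dTR x1 x2 * exp (c / 2 * t)"
    proof -
      have "exp (c * t) = (exp (c / 2 * t))\<^sup>2" by (simp add: exp_double[symmetric] power2_eq_square exp_add[symmetric])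
      moreover have "dTR x1 x2 \<ge> 0" unfolding dTR_def by simp
      ultimately show ?thesis unfolding p0 by (simp add: real_sqrt_mult)
    qed
    finally show "dTR (X t x1) (X t x2) \<le> dTR x1 x2 * exp (c / 2 * t)" .
  qed
qed

end
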